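(* Let $G=\langle b\rangle\wr\langle a\rangle$ be the restricted wreath product with $\langle a\rangle\cong\langle b\rangle\cong\mathbb Z$. Then the bijection $$f\colon\{\,a^n\mid n\in\mathbb N\,\}\to\mathbb N,\quad a^n\mapsto n$$ is an interpretation of $(\mathbb N,+,\times)$ in the group $(G,\cdot)$ with parameters.
   Context: The restricted wreath product $\langle b\rangle\wr\langle a\rangle$ means: the elements $a^{-k}ba^k$, $k\in\mathbb Z$, generate a free abelian group $H$ with basis $(a^{-k}ba^k)_{k\in\mathbb Z}$, and the group generated by $a,b$ is $H\rtimes\langle a\rangle$. An interpretation with parameters of $M$ in $N$ is a pair $(n,f)$, $f$ a surjection from a subset of $N^n$ onto $M$, such that the preimage under $f$ (applied coordinatewise) of every set definable without parameters in $M$ is first-order definable in $N$ with parameters from $N$. *)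

theory Defs
  imports Main
begin

text \<open>Elements are pairs (h, k): h a finitely supported function Z -> Z (the base
group H, free abelian on the conjugates of b) and k the exponent of a.\<close>

definition wr_carrier :: "((int \<Rightarrow> int) \<times> int) set" where
  "wr_carrier = {(h, k). finite {i. h i \<noteq> 0}}"

definition wr_mult :: "(int \<Rightarrow> int) \<times> int \<Rightarrow> (int \<Rightarrow> int) \<times> int \<Rightarrow> (int \<Rightarrow> int) \<times> int" where
  "wr_mult x y = ((\<lambda>i. fst x i + fst y (i - snd x)), snd x + snd y)"

definition wr_one :: "(int \<Rightarrow> int) \<times> int" where
  "wr_one = ((\<lambda>i. 0), 0)"

definition wr_a :: "(int \<Rightarrow> int) \<times> int" where
  "wr_a = ((\<lambda>i. 0), 1)"

definition wr_b :: "(int \<Rightarrow> int) \<times> int" where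
  "wr_b = ((\<lambda>i. if i = 0 then 1 else 0), 0)"

definition wr_pow :: "(int \<Rightarrow> int) \<times> int \<Rightarrow> nat \<Rightarrow> (int \<Rightarrow> int) \<times> int" where
  "wr_pow x n = (wr_mult x ^^ n) wr_one"

datatype gterm = GVar nat | GMul gterm gterm
datatype gform = GEq gterm gterm | GNot gform | GAnd gform gform | GEx nat gform

fun gval :: "('g \<Rightarrow> 'g \<Rightarrow> 'g) \<Rightarrow> (nat \<Rightarrow> 'g) \<Rightarrow> gterm \<Rightarrow> 'g" where
  "gval m e (GVar v) = e v"
| "gval m e (GMul s t) = m (gval m e s) (gval m e t)"

fun gsat :: "'g set \<Rightarrow> ('g \<Rightarrow> 'g \<Rightarrow> 'g) \<Rightarrow> (nat \<Rightarrow> 'g) \<Rightarrow> gform \<Rightarrow> bool" where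
  "gsat C m e (GEq s t) = (gval m e s = gval m e t)"
| "gsat C m e (GNot \<phi>) = (\<not> gsat C m e \<phi>)"
| "gsat C m e (GAnd \<phi> \<psi>) = (gsat C m e \<phi> \<and> gsat C m e \<psi>)"
| "gsat C m e (GEx v \<phi>) = (\<exists>x\<in>C. gsat C m (e(v := x)) \<phi>)"

fun gtvars :: "gterm \<Rightarrow> nat set" where
  "gtvars (GVar v) = {v}"
| "gtvars (GMul s t) = gtvars s \<union> gtvars t"

fun gfv :: "gform \<Rightarrow> nat set" where
  "gfv (GEq s t) = gtvars s \<union> gtvars t"
| "gfv (GNot \<phi>) = gfv \<phi>"
| "gfv (GAnd \<phi> \<psi>) = gfv \<phi> \<union> gfv \<psi>"
| "gfv (GEx v \<phi>) = gfv \<phi> - {v}"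

definition group_definable_params :: "'g set \<Rightarrow> ('g \<Rightarrow> 'g \<Rightarrow> 'g) \<Rightarrow> nat \<Rightarrow> 'g list set \<Rightarrow> bool" where
  "group_definable_params C m k X \<longleftrightarrow>
     (\<exists>\<phi> ps. set ps \<subseteq> C \<and> gfv \<phi> \<subseteq> {..<k + length ps} \<and>
        X = {xs. length xs = k \<and> set xs \<subseteq> C \<and> gsat C m (\<lambda>i. (xs @ ps) ! i) \<phi>})"

datatype aterm = AVar nat | APlus aterm aterm | ATimes aterm aterm
datatype aform = AEq aterm aterm | ANot aform | AAnd aform aform | AEx nat aform

fun aval :: "(nat \<Rightarrow> nat) \<Rightarrow> aterm \<Rightarrow> nat" where
  "aval e (AVar v) = e v"
| "aval e (APlus s t) = aval e s + aval e t"
| "aval e (ATimes s t) = aval e s * aval e t"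

fun asat :: "(nat \<Rightarrow> nat) \<Rightarrow> aform \<Rightarrow> bool" where
  "asat e (AEq s t) = (aval e s = aval e t)"
| "asat e (ANot \<phi>) = (\<not> asat e \<phi>)"
| "asat e (AAnd \<phi> \<psi>) = (asat e \<phi> \<and> asat e \<psi>)"
| "asat e (AEx v \<phi>) = (\<exists>x. asat (e(v := x)) \<phi>)"

fun atvars :: "aterm \<Rightarrow> nat set" where
  "atvars (AVar v) = {v}"
| "atvars (APlus s t) = atvars s \<union> atvars t"
| "atvars (ATimes s t) = atvars s \<union> atvars t"

fun afv :: "aform \<Rightarrow> nat set" where
  "afv (AEq s t) = atvars s \<union> atvars t"
| "afv (ANot \<phi>) = afv \<phi>"
| "afv (AAnd \<phi> \<psi>) = afv \<phi> \<union> afv \<psi>"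
| "afv (AEx v \<phi>) = afv \<phi> - {v}"

definition arith_definable :: "nat \<Rightarrow> nat list set \<Rightarrow> bool" where
  "arith_definable k S \<longleftrightarrow>
     (\<exists>\<phi>. afv \<phi> \<subseteq> {..<k} \<and> S = {xs. length xs = k \<and> asat (\<lambda>i. xs ! i) \<phi>})"

definition interpretation_params_nat :: "'g set \<Rightarrow> ('g \<Rightarrow> 'g \<Rightarrow> 'g) \<Rightarrow> nat \<Rightarrow> 'g list set \<Rightarrow> ('g list \<Rightarrow> nat) \<Rightarrow> bool" where
  "interpretation_params_nat C m n D f \<longleftrightarrow>
     D \<subseteq> {xs. length xs = n \<and> set xs \<subseteq> C} \<and> f ` D = UNIV \<and>
     (\<forall>k S. arith_definable k S \<longrightarrow>
        group_definable_params C m (n * k)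
          {concat ds | ds. length ds = k \<and> set ds \<subseteq> D \<and> map f ds \<in> S})"

end

theory Submission
  imports Defs "HOL-Computational_Algebra.Primes"
begin

definition sq4 :: "int \<Rightarrow> bool" where
  "sq4 n \<longleftrightarrow> (\<exists>a b c d. n = a^2 + b^2 + c^2 + d^2)"

lemma euler4:
  fixes a b c d w x y z :: int
  shows "(a^2+b^2+c^2+d^2)*(w^2+x^2+y^2+z^2) =
    (a*w+b*x+c*y+d*z)^2 + (a*x-b*w+c*z-d*y)^2 + (a*y-b*z-c*w+d*x)^2 + (a*z+b*y-c*x-d*w)^2"
  by (simp add: power2_eq_square algebra_simps)

lemma sq4_mult: "sq4 m \<Longrightarrow> sq4 n \<Longrightarrow> sq4 (m*n)"
  unfolding sq4_def by (metis euler4)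

lemma red_ex:
  fixes x m :: int assumes "m > 0"
  shows "\<exists>k. - m < 2*(x + m*k) \<and> 2*(x + m*k) \<le> m"
proof -
  define u where "u = 2*x + m"
  define k where "k = - ((u - 1) div (2*m))"
  have "u + 2*m*k = (u - 1) mod (2*m) + 1"
    unfolding k_def using div_mult_mod_eq[of "u-1" "2*m"] by (simp add: algebra_simps)
  moreover have "0 \<le> (u - 1) mod (2*m)" "(u - 1) mod (2*m) < 2*m" using assms by auto
  ultimately show ?thesis unfolding u_def by (intro exI[of _ k]) (auto simp: algebra_simps)
qed

lemma sq_bound:
  fixes y m :: int assumes "- m < 2*y" "2*y \<le> m"
  shows "4*y^2 \<le> m^2" "4*y^2 = m^2 \<Longrightarrow> 2*y = m"
proof -
  have "\<bar>2*y\<bar> \<le> m" using assms by linarith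
  hence "(2*y)^2 \<le> m^2" using assms by (subst power2_le_iff_abs_le) auto
  thus "4*y^2 \<le> m^2" by (simp add: power_mult_distrib)
  assume "4*y^2 = m^2"
  hence h: "(2*y)^2 = m^2" by (simp add: power_mult_distrib)
  have "2*y = m \<or> 2*y = -m" using h power2_eq_iff by blast
  thus "2*y = m" using assms by auto
qed

lemma prime_no_mid_dvd:
  fixes p m :: int assumes "prime p" "1 < m" "m < p" "m dvd p" shows False
proof -
  from assms(1) have "\<forall>m. 0 \<le> m \<and> m dvd p \<longrightarrow> m = 1 \<or> m = p" by (simp add: prime_int_iff)
  moreover have "0 \<le> m \<and> m dvd p" using assms(2,4) by simp
  ultimately have "m = 1 \<or> m = p" by blast
  with assms(2,3) show False by simp
qed

lemma descent:
  fixes p m x1 x2 x3 x4 :: int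
  assumes "prime p" "1 < m" "m < p" and mp: "m * p = x1^2+x2^2+x3^2+x4^2"
  shows "\<exists>r. 0 < r \<and> r < m \<and> sq4 (r * p)"
proof -
  have m0: "m > 0" using assms by auto
  obtain k1 where k1: "- m < 2*(x1 + m*k1)" "2*(x1 + m*k1) \<le> m" using red_ex[OF m0] by blast
  obtain k2 where k2: "- m < 2*(x2 + m*k2)" "2*(x2 + m*k2) \<le> m" using red_ex[OF m0] by blast
  obtain k3 where k3: "- m < 2*(x3 + m*k3)" "2*(x3 + m*k3) \<le> m" using red_ex[OF m0] by blast
  obtain k4 where k4: "- m < 2*(x4 + m*k4)" "2*(x4 + m*k4) \<le> m" using red_ex[OF m0] by blast
  define y1 where "y1 = x1 + m*k1"
  define y2 where "y2 = x2 + m*k2"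
  define y3 where "y3 = x3 + m*k3"
  define y4 where "y4 = x4 + m*k4"
  define r where "r = p + (2*x1*k1 + m*k1^2) + (2*x2*k2 + m*k2^2) + (2*x3*k3 + m*k3^2) + (2*x4*k4 + m*k4^2)"
  have yr: "y1^2+y2^2+y3^2+y4^2 = m * r"
    unfolding y1_def y2_def y3_def y4_def r_def using mp by algebra
  note b1 = sq_bound[OF k1[folded y1_def]] and b2 = sq_bound[OF k2[folded y2_def]]
   and b3 = sq_bound[OF k3[folded y3_def]] and b4 = sq_bound[OF k4[folded y4_def]]
  have "4*(m*r) \<le> 4*(m*m)" using b1(1) b2(1) b3(1) b4(1) yr by (simp add: power2_eq_square)
  hence rm: "r \<le> m" using m0 by simp
  have "0 \<le> m * r" using yr[symmetric] by (simp add: add_nonneg_nonneg)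
  hence r0: "0 \<le> r" using m0 by (simp add: zero_le_mult_iff)
  show ?thesis
  proof (cases "r = 0")
    case True
    hence "y1^2+y2^2+y3^2+y4^2 = 0" using yr by simp
    hence "y1^2 = 0 \<and> y2^2 = 0 \<and> y3^2 = 0 \<and> y4^2 = 0"
      using zero_le_power2[of y1] zero_le_power2[of y2] zero_le_power2[of y3] zero_le_power2[of y4] by linarith
    hence "y1 = 0 \<and> y2 = 0 \<and> y3 = 0 \<and> y4 = 0" by simp
    hence "x1 = -m*k1" "x2 = -m*k2" "x3 = -m*k3" "x4 = -m*k4"
      unfolding y1_def y2_def y3_def y4_def by auto
    hence "m * p = m * (m * (k1^2+k2^2+k3^2+k4^2))" using mp by algebra
    hence "p = m * (k1^2+k2^2+k3^2+k4^2)" using m0 by simp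
    hence "m dvd p" by simp
    thus ?thesis using prime_no_mid_dvd assms by blast
  next
    case rn0: False
    show ?thesis
    proof (cases "r = m")
      case True
      have "4*y1^2 = m^2 \<and> 4*y2^2 = m^2 \<and> 4*y3^2 = m^2 \<and> 4*y4^2 = m^2"
        using b1(1) b2(1) b3(1) b4(1) yr True by (auto simp: power2_eq_square)
      hence "2*y1 = m" "2*y2 = m" "2*y3 = m" "2*y4 = m" using b1(2) b2(2) b3(2) b4(2) by auto
      hence e: "2*x1 = m*(1 - 2*k1)" "2*x2 = m*(1 - 2*k2)" "2*x3 = m*(1 - 2*k3)" "2*x4 = m*(1 - 2*k4)"
        unfolding y1_def y2_def y3_def y4_def by (simp_all add: algebra_simps)
      have "4 * (m * p) = (2*x1)^2 + (2*x2)^2 + (2*x3)^2 + (2*x4)^2"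
        using mp by (simp add: power_mult_distrib)
      also have "\<dots> = 4 * (m * (m * (1 + (k1^2-k1) + (k2^2-k2) + (k3^2-k3) + (k4^2-k4))))"
        unfolding e by algebra
      finally have "m * p = m * (m * (1 + (k1^2-k1) + (k2^2-k2) + (k3^2-k3) + (k4^2-k4)))" by simp
      hence "p = m * (1 + (k1^2-k1) + (k2^2-k2) + (k3^2-k3) + (k4^2-k4))" using m0 by simp
      hence "m dvd p" by simp
      thus ?thesis using prime_no_mid_dvd assms by blast
    next
      case False
      hence r1: "0 < r" "r < m" using rm r0 rn0 by auto
      define Q1 where "Q1 = p + x1*k1 + x2*k2 + x3*k3 + x4*k4"
      define Q2 where "Q2 = x1*k2 - x2*k1 + x3*k4 - x4*k3"
      define Q3 where "Q3 = x1*k3 - x2*k4 - x3*k1 + x4*k2"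
      define Q4 where "Q4 = x1*k4 + x2*k3 - x3*k2 - x4*k1"
      have z1: "x1*y1+x2*y2+x3*y3+x4*y4 = m * Q1"
        unfolding y1_def y2_def y3_def y4_def Q1_def using mp by algebra
      have z2: "x1*y2-x2*y1+x3*y4-x4*y3 = m * Q2"
        unfolding y1_def y2_def y3_def y4_def Q2_def by algebra
      have z3: "x1*y3-x2*y4-x3*y1+x4*y2 = m * Q3"
        unfolding y1_def y2_def y3_def y4_def Q3_def by algebra
      have z4: "x1*y4+x2*y3-x3*y2-x4*y1 = m * Q4"
        unfolding y1_def y2_def y3_def y4_def Q4_def by algebra
      have "(m*p)*(m*r) = (m*Q1)^2 + (m*Q2)^2 + (m*Q3)^2 + (m*Q4)^2"
        unfolding mp yr[symmetric] euler4 z1 z2 z3 z4 ..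
      hence "(m*m)*(r*p) = (m*m)*(Q1^2+Q2^2+Q3^2+Q4^2)" by algebra
      hence "r * p = Q1^2+Q2^2+Q3^2+Q4^2" using m0 by simp
      thus ?thesis using r1 unfolding sq4_def by blast
    qed
  qed
qed


lemma dvd_small_zero:
  fixes P z :: int assumes "P dvd z" "\<bar>z\<bar> < P" shows "z = 0"
proof (rule ccontr)
  assume "z \<noteq> 0"
  hence "\<bar>P\<bar> \<le> \<bar>z\<bar>" using dvd_imp_le_int assms(1) by blast
  thus False using assms(2) by linarith
qed

lemma sq_mod_coll:
  fixes P :: int assumes "prime P" "P = 2*h + 1"
  shows "\<exists>x y. 0 \<le> x \<and> x \<le> h \<and> 0 \<le> y \<and> y \<le> h \<and> P dvd x^2 + y^2 + 1"
proof -
  have P1: "P > 1" using assms(1) prime_gt_1_int by blast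
  hence h0: "h \<ge> 0" using assms(2) by linarith
  define A where "A = (\<lambda>x. x^2 mod P) ` {0..h}"
  define B where "B = (\<lambda>y. (-1 - y^2) mod P) ` {0..h}"
  have key: "x = x'" if "x \<in> {0..h}" "x' \<in> {0..h}" "P dvd x^2 - x'^2" for x x'
  proof -
    have "x^2 - x'^2 = (x - x') * (x + x')" by (simp add: power2_eq_square algebra_simps)
    hence "P dvd (x - x') \<or> P dvd (x + x')" using that(3) assms(1) prime_dvd_mult_iff by metis
    thus ?thesis
    proof
      assume "P dvd x - x'"
      moreover have "\<bar>x - x'\<bar> < P" using that assms(2) by auto
      ultimately show ?thesis using dvd_small_zero by fastforce
    next
      assume "P dvd x + x'"
      moreover have "\<bar>x + x'\<bar> < P" using that assms(2) by auto
      ultimately have "x + x' = 0" using dvd_small_zero by blast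
      thus ?thesis using that by auto
    qed
  qed
  have injA: "inj_on (\<lambda>x. x^2 mod P) {0..h}"
    by (rule inj_onI) (use key mod_eq_dvd_iff in blast)
  have injB: "inj_on (\<lambda>y. (-1 - y^2) mod P) {0..h}"
  proof (rule inj_onI)
    fix x x' assume xx: "x \<in> {0..h}" "x' \<in> {0..h}" "(-1 - x^2) mod P = (-1 - x'^2) mod P"
    hence "P dvd (-1 - x^2) - (-1 - x'^2)" using mod_eq_dvd_iff by blast
    hence "P dvd -(x^2 - x'^2)" by (simp add: algebra_simps)
    hence "P dvd x^2 - x'^2" using dvd_minus_iff by blast
    thus "x = x'" using key xx by blast
  qed
  have cA: "card A = nat (h + 1)" unfolding A_def using card_image[OF injA] by simp
  have cB: "card B = nat (h + 1)" unfolding B_def using card_image[OF injB] by simp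
  have sub: "A \<union> B \<subseteq> {0..<P}" unfolding A_def B_def using P1 by auto
  have "A \<inter> B \<noteq> {}"
  proof
    assume "A \<inter> B = {}"
    hence "card (A \<union> B) = card A + card B" by (simp add: card_Un_disjoint A_def B_def)
    also have "\<dots> = nat (P + 1)" using cA cB assms(2) h0 by simp
    finally have "nat (P + 1) \<le> card {0..<P}" using card_mono[OF _ sub] by simp
    thus False using P1 by simp
  qed
  then obtain x y where xy: "x \<in> {0..h}" "y \<in> {0..h}" "x^2 mod P = (-1 - y^2) mod P"
    unfolding A_def B_def by fastforce
  hence "P dvd x^2 - (-1 - y^2)" using mod_eq_dvd_iff by blast
  hence "P dvd x^2 + y^2 + 1" by (simp add: algebra_simps)
  thus ?thesis using xy by auto
qed

lemma prime_sq4: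
  fixes p :: nat assumes "prime p" shows "sq4 (int p)"
proof (cases "p = 2")
  case True
  have "int p = 1^2 + 1^2 + 0^2 + 0^2" using True by simp
  thus ?thesis unfolding sq4_def by blast
next
  case False
  define P where "P = int p"
  have pP: "prime P" using assms unfolding P_def by simp
  have "p > 2" using False prime_ge_2_nat[OF assms] by linarith
  hence "odd p" using prime_odd_nat assms by blast
  then obtain k where "p = 2*k + 1" by (rule oddE)
  hence h: "P = 2*int k + 1" unfolding P_def by simp
  have P3: "P \<ge> 3" using \<open>p > 2\<close> unfolding P_def by simp
  obtain x y where xy: "0 \<le> x" "x \<le> int k" "0 \<le> y" "y \<le> int k" "P dvd x^2 + y^2 + 1"
    using sq_mod_coll[OF pP h] by blast
  then obtain M where M: "x^2 + y^2 + 1 = P * M" by blast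
  have "(2*x)^2 \<le> (P-1)^2" "(2*y)^2 \<le> (P-1)^2" using xy h by (auto intro!: power_mono)
  hence f: "4*x^2 \<le> P^2 - 2*P + 1" "4*y^2 \<le> P^2 - 2*P + 1"
    by (simp_all add: power2_eq_square algebra_simps)
  have "3 * P \<le> P^2" using P3 by (simp add: power2_eq_square)
  hence "4*x^2 + 4*y^2 + 4 < 4*P^2" using f P3 by linarith
  hence "4*(x^2 + y^2 + 1) < 4*P^2" by simp
  hence "P * M < P * P" unfolding M by (simp add: power2_eq_square)
  hence "M < P" using P3 by simp
  moreover have "0 < P * M" unfolding M[symmetric] by (simp add: add_nonneg_pos)
  hence "0 < M" using P3 by (simp add: zero_less_mult_iff)
  moreover have "sq4 (M * P)" unfolding sq4_def
    by (rule exI[of _ x], rule exI[of _ y], rule exI[of _ 1], rule exI[of _ 0]) (use M in \<open>simp add: algebra_simps\<close>)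
  ultimately have ex: "\<exists>n::nat. 0 < int n \<and> int n < P \<and> sq4 (int n * P)"
    by (intro exI[of _ "nat M"]) simp
  obtain n :: nat where n: "0 < int n \<and> int n < P \<and> sq4 (int n * P)"
    and least: "\<forall>k<n. \<not> (0 < int k \<and> int k < P \<and> sq4 (int k * P))"
    using ex exists_least_iff[of "\<lambda>n::nat. 0 < int n \<and> int n < P \<and> sq4 (int n * P)"] by blast
  have "n = 1"
  proof (rule ccontr)
    assume "n \<noteq> 1"
    hence "1 < int n" using n by simp
    moreover obtain x1 x2 x3 x4 where "int n * P = x1^2+x2^2+x3^2+x4^2" using n unfolding sq4_def by blast
    ultimately obtain r where r: "0 < r" "r < int n" "sq4 (r * P)"
      using descent[OF pP] n by blast
    hence "nat r < n" "0 < int (nat r) \<and> int (nat r) < P \<and> sq4 (int (nat r) * P)" using n by auto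
    thus False using least by blast
  qed
  thus ?thesis using n unfolding P_def by simp
qed

lemma nat_sq4: "sq4 (int n)"
proof (induction n rule: less_induct)
  case (less n)
  show ?case
  proof (cases "n \<le> 1")
    case True
    hence "int n = (int n)^2 + 0^2 + 0^2 + 0^2" by (cases n) (auto simp: power2_eq_square)
    thus ?thesis unfolding sq4_def by blast
  next
    case False
    then obtain p where p: "prime p" "p dvd n" using prime_factor_nat[of n] by auto
    then obtain q where q: "n = p * q" by blast
    have "p > 1" using prime_gt_1_nat p(1) by blast
    have "q \<noteq> 0" using q False by (metis le0 mult_0_right)
    hence "q < n" using q n_less_m_mult_n[of q p] \<open>p > 1\<close> by (simp add: mult.commute)
    hence "sq4 (int q)" using less by blast
    thus ?thesis using sq4_mult[OF prime_sq4[OF p(1)]] q by simp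
  qed
qed

lemma sq4_iff_nonneg: "sq4 k \<longleftrightarrow> 0 \<le> k"
proof
  assume "sq4 k" thus "0 \<le> k" unfolding sq4_def by auto
next
  assume "0 \<le> k" thus "sq4 k" using nat_sq4[of "nat k"] by simp
qed

abbreviation "FS f \<equiv> finite {n::int. f n \<noteq> (0::int)}"

definition fsum :: "(int \<Rightarrow> int) \<Rightarrow> int" where
  "fsum f = sum f {n. f n \<noteq> 0}"

lemma fsum_eq: "finite A \<Longrightarrow> {n. f n \<noteq> 0} \<subseteq> A \<Longrightarrow> fsum f = sum f A"
  unfolding fsum_def by (rule sum.mono_neutral_left) auto

lemma FS_add: "FS f \<Longrightarrow> FS g \<Longrightarrow> FS (\<lambda>n. f n + g n)"
  by (rule finite_subset[of _ "{n. f n \<noteq> 0} \<union> {n. g n \<noteq> 0}"]) auto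

lemma FS_cmult: "FS f \<Longrightarrow> FS (\<lambda>n. c n * f n)"
  by (rule finite_subset[of _ "{n. f n \<noteq> 0}"]) auto

lemma FS_neg: "FS f \<Longrightarrow> FS (\<lambda>n. - f n)"
  by simp

lemma FS_shift: "FS f \<Longrightarrow> FS (\<lambda>n. f (n - i))"
proof -
  assume "FS f"
  have "{n. f (n - i) \<noteq> 0} = (\<lambda>m. m + i) ` {n. f n \<noteq> 0}" by force
  thus ?thesis using \<open>FS f\<close> by simp
qed

lemma fsum_add: "FS f \<Longrightarrow> FS g \<Longrightarrow> fsum (\<lambda>n. f n + g n) = fsum f + fsum g"
proof -
  assume f: "FS f" and g: "FS g"
  let ?A = "{n. f n \<noteq> 0} \<union> {n. g n \<noteq> 0}"
  have "fsum (\<lambda>n. f n + g n) = sum (\<lambda>n. f n + g n) ?A" by (rule fsum_eq) (use f g in auto)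
  also have "\<dots> = sum f ?A + sum g ?A" by (rule sum.distrib)
  also have "sum f ?A = fsum f" by (rule fsum_eq[symmetric]) (use f g in auto)
  also have "sum g ?A = fsum g" by (rule fsum_eq[symmetric]) (use f g in auto)
  finally show ?thesis .
qed

lemma fsum_cmult: "FS f \<Longrightarrow> fsum (\<lambda>n. c * f n) = c * fsum f"
proof -
  assume f: "FS f"
  have "fsum (\<lambda>n. c * f n) = sum (\<lambda>n. c * f n) {n. f n \<noteq> 0}" by (rule fsum_eq) (use f in auto)
  also have "\<dots> = c * fsum f" unfolding fsum_def by (simp add: sum_distrib_left)
  finally show ?thesis .
qed

lemma fsum_neg: "fsum (\<lambda>n. - f n) = - fsum f"
  unfolding fsum_def by (simp add: sum_negf)

lemma fsum_shift: "FS f \<Longrightarrow> fsum (\<lambda>n. f (n - i)) = fsum f"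
proof -
  assume f: "FS f"
  have e: "{n. f (n - i) \<noteq> 0} = (\<lambda>m. m + i) ` {n. f n \<noteq> 0}" by force
  have "fsum (\<lambda>n. f (n - i)) = sum (\<lambda>n. f (n - i)) ((\<lambda>m. m + i) ` {n. f n \<noteq> 0})"
    unfolding fsum_def e ..
  also have "\<dots> = sum f {n. f n \<noteq> 0}" by (subst sum.reindex) (auto simp: inj_on_def)
  finally show ?thesis unfolding fsum_def .
qed

lemma fsum_delta: "fsum (\<lambda>n. if n = c then a else 0) = a"
  by (subst fsum_eq[of "{c}"]) auto

lemma fsum_zero: "fsum (\<lambda>n. 0) = 0"
  unfolding fsum_def by simp

definition fmom :: "(int \<Rightarrow> int) \<Rightarrow> int" where
  "fmom f = fsum (\<lambda>n. n * f n)"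

lemma fmom_add: "FS f \<Longrightarrow> FS g \<Longrightarrow> fmom (\<lambda>n. f n + g n) = fmom f + fmom g"
  unfolding fmom_def by (simp add: distrib_left fsum_add FS_cmult)

lemma fmom_shift: "FS f \<Longrightarrow> fmom (\<lambda>n. f (n - i)) = fmom f + i * fsum f"
proof -
  assume f: "FS f"
  have "fmom (\<lambda>n. f (n - i)) = fsum (\<lambda>n. (\<lambda>m. m * f m + i * f m) (n - i))"
    unfolding fmom_def by (rule arg_cong[where f=fsum]) (auto simp: algebra_simps)
  also have "\<dots> = fsum (\<lambda>m. m * f m + i * f m)" by (rule fsum_shift) (use f in \<open>intro FS_add FS_cmult\<close>)
  also have "\<dots> = fmom f + i * fsum f" unfolding fmom_def
    by (subst fsum_add) (use f in \<open>auto intro: FS_cmult simp: fsum_cmult\<close>)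
  finally show ?thesis .
qed

lemma fmom_delta: "fmom (\<lambda>n. if n = c then 1 else 0) = c"
  unfolding fmom_def by (subst fsum_eq[of "{c}"]) auto

definition dl :: "int \<Rightarrow> int \<Rightarrow> int" where "dl c n = (if n = c then 1 else 0)"

lemma FS_dl: "FS (dl c)" by (rule finite_subset[of _ "{c}"]) (auto simp: dl_def)

lemma telescope:
  fixes g :: "int \<Rightarrow> int"
  assumes g: "FS g" "fsum g = 0"
  shows "\<exists>h. FS h \<and> (\<forall>n. h n = h (n - 1) + g n)"
proof -
  define N where "N = Max (abs ` {n. g n \<noteq> 0} \<union> {0})"
  have Nb: "g n = 0" if "n < -N \<or> n > N" for n
  proof (rule ccontr)
    assume "g n \<noteq> 0"
    hence "\<bar>n\<bar> \<le> N" unfolding N_def using g(1) by (intro Max_ge) auto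
    thus False using that by linarith
  qed
  define h where "h n = sum g {-N..n}" for n
  have step: "h n = h (n - 1) + g n" for n
  proof (cases "n < -N")
    case True thus ?thesis unfolding h_def using Nb[of n] by simp
  next
    case False
    hence "{-N..n} = insert n {-N..n-1}" by auto
    thus ?thesis unfolding h_def by simp
  qed
  have "{n. h n \<noteq> 0} \<subseteq> {-N..N}"
  proof
    fix n assume n: "n \<in> {n. h n \<noteq> 0}"
    show "n \<in> {-N..N}"
    proof (rule ccontr)
      assume "n \<notin> {-N..N}"
      hence "n < -N \<or> n > N" by auto
      moreover have "n < -N \<Longrightarrow> h n = 0" unfolding h_def by simp
      moreover have "h n = 0" if "n > N"
      proof -
        have "h n = fsum g" unfolding h_def
        proof (rule fsum_eq[symmetric])
          show "{n. g n \<noteq> 0} \<subseteq> {-N..n}"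
          proof
            fix m assume "m \<in> {n. g n \<noteq> 0}"
            hence "\<not> (m < -N \<or> m > N)" using Nb by blast
            thus "m \<in> {-N..n}" using that by auto
          qed
        qed simp
        thus ?thesis using g(2) by simp
      qed
      ultimately show False using n by auto
    qed
  qed
  hence "FS h" by (rule finite_subset) simp
  thus ?thesis using step by blast
qed

lemma in_C: "(h, k) \<in> wr_carrier \<longleftrightarrow> FS h"
  by (simp add: wr_carrier_def)

lemma mult_pair: "wr_mult (h1, k1) (h2, k2) = ((\<lambda>i. h1 i + h2 (i - k1)), k1 + k2)"
  by (simp add: wr_mult_def)

lemma wr_a_eq: "wr_a = ((\<lambda>_. 0), 1)" by (simp add: wr_a_def)
lemma wr_b_eq: "wr_b = (dl 0, 0)" by (simp add: wr_b_def dl_def fun_eq_iff)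

lemma pow_a: "wr_pow wr_a n = ((\<lambda>_. 0), int n)"
  by (induction n) (simp_all add: wr_pow_def wr_one_def wr_mult_def wr_a_def)

lemma zero_in_C: "((\<lambda>_. 0::int), k) \<in> wr_carrier" by (simp add: in_C)

lemma commA:
  assumes "g \<in> wr_carrier"
  shows "wr_mult g wr_a = wr_mult wr_a g \<longleftrightarrow> (\<exists>k. g = ((\<lambda>_. 0), k))"
proof -
  obtain h k where g: "g = (h, k)" by fastforce
  have fs: "FS h" using assms g in_C by simp
  have "wr_mult g wr_a = wr_mult wr_a g \<longleftrightarrow> (\<forall>n. h n = h (n - 1))"
    unfolding g wr_a_eq mult_pair by (simp add: fun_eq_iff)
  also have "\<dots> \<longleftrightarrow> h = (\<lambda>_. 0)"
  proof
    assume st: "\<forall>n. h n = h (n - 1)"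
    have c: "h n = h 0" for n
    proof (induction n rule: int_induct[where k=0])
      case base show ?case ..
    next
      case (step1 i) thus ?case using st[rule_format, of "i+1"] by simp
    next
      case (step2 i) thus ?case using st[rule_format, of i] by simp
    qed
    show "h = (\<lambda>_. 0)"
    proof (rule ccontr)
      assume "h \<noteq> (\<lambda>_. 0)"
      hence "h 0 \<noteq> 0" using c by auto
      hence "\<forall>n. h n \<noteq> 0" using c by metis
      hence "{n. h n \<noteq> 0} = UNIV" by auto
      thus False using fs by simp
    qed
  qed simp
  finally show ?thesis unfolding g by auto
qed

lemma commB: "wr_mult g wr_b = wr_mult wr_b g \<longleftrightarrow> snd g = 0"
proof -
  obtain h k where g: "g = (h, k)" by fastforce
  show ?thesis
  proof
    assume "wr_mult g wr_b = wr_mult wr_b g"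
    hence "\<forall>n. h n + dl 0 (n - k) = dl 0 n + h n"
      unfolding g wr_b_eq mult_pair by (simp add: fun_eq_iff)
    from this[rule_format, of k] show "snd g = 0" unfolding g by (simp add: dl_def split: if_splits)
  qed (simp add: g wr_b_eq mult_pair add.commute)
qed

lemma bX: "wr_mult wr_b ((\<lambda>_. 0), i) = (dl 0, i)"
  by (simp add: wr_b_eq mult_pair)

lemma fsum_dl: "fsum (dl c) = 1" unfolding dl_def using fsum_delta[of c 1] by simp
lemma fmom_dl: "fmom (dl c) = c" unfolding dl_def by (rule fmom_delta)

lemma commBX:
  assumes "FS h" "wr_mult (h, k) (dl 0, i) = wr_mult (dl 0, i) (h, k)"
  shows "k = i * fsum h"
proof -
  have "(\<lambda>n. h n + dl 0 (n - k)) = (\<lambda>n. dl 0 n + h (n - i))"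
    using assms(2) unfolding mult_pair by simp
  hence "fmom (\<lambda>n. h n + dl 0 (n - k)) = fmom (\<lambda>n. dl 0 n + h (n - i))" by simp
  moreover have "fmom (\<lambda>n. h n + dl 0 (n - k)) = fmom h + k"
    using assms(1) FS_dl fmom_add[OF assms(1) FS_shift[OF FS_dl]] fmom_shift[OF FS_dl]
    by (simp add: fsum_dl fmom_dl)
  moreover have "fmom (\<lambda>n. dl 0 n + h (n - i)) = fmom h + i * fsum h"
    using fmom_add[OF FS_dl FS_shift[OF assms(1)]] fmom_shift[OF assms(1)]
    by (simp add: fmom_dl)
  ultimately show ?thesis by simp
qed

definition sfun :: "int \<Rightarrow> int \<Rightarrow> int" where
  "sfun m n = (if 0 \<le> n \<and> n < m then 1 else if m \<le> n \<and> n < 0 then -1 else 0)"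

lemma sfun_id: "sfun m n + dl m n = dl 0 n + sfun m (n - 1)"
  by (auto simp: sfun_def dl_def)

lemma FS_sfun: "FS (sfun m)"
  by (rule finite_subset[of _ "{min 0 m..max 0 m}"]) (auto simp: sfun_def)

lemma dl_shift: "dl 0 (n - k) = dl k n" by (simp add: dl_def)

lemma sfun_comm: "wr_mult (sfun m, m) (dl 0, 1) = wr_mult (dl 0, 1) (sfun m, m)"
proof -
  have "\<forall>x. sfun m x + dl m x = dl 0 x + sfun m (x-1)" using sfun_id by blast
  thus ?thesis unfolding mult_pair by (simp add: fun_eq_iff dl_shift add.commute)
qed

definition efun :: "int \<Rightarrow> int \<Rightarrow> int \<Rightarrow> int" where
  "efun i j n = (if i dvd n then sfun j (n div i) else 0)"

lemma FS_efun: assumes "i \<noteq> 0" shows "FS (efun i j)"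
proof (rule finite_subset[of _ "(\<lambda>q. i * q) ` {n. sfun j n \<noteq> 0}"])
  show "{n. efun i j n \<noteq> 0} \<subseteq> (\<lambda>q. i * q) ` {n. sfun j n \<noteq> 0}"
  proof
    fix n assume "n \<in> {n. efun i j n \<noteq> 0}"
    hence n: "i dvd n" "sfun j (n div i) \<noteq> 0" by (auto simp: efun_def split: if_splits)
    then obtain q where "n = i * q" by blast
    thus "n \<in> (\<lambda>q. i * q) ` {n. sfun j n \<noteq> 0}" using n assms by auto
  qed
qed (use FS_sfun in simp)

lemma efun_comm:
  assumes "i \<noteq> 0"
  shows "wr_mult (efun i j, i * j) (dl 0, i) = wr_mult (dl 0, i) (efun i j, i * j)"
proof -
  have "efun i j n + dl (i*j) n = dl 0 n + efun i j (n - i)" for n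
  proof (cases "i dvd n")
    case True
    then obtain q where q: "n = i * q" by blast
    have "n - i = i * (q - 1)" using q by (simp add: algebra_simps)
    hence "efun i j (n - i) = sfun j (q - 1)" using assms by (simp add: efun_def)
    moreover have "efun i j n = sfun j q" using q assms by (simp add: efun_def)
    moreover have "dl (i*j) n = dl j q" "dl 0 n = dl 0 q" using q assms by (auto simp: dl_def)
    ultimately show ?thesis using sfun_id[of j q] by simp
  next
    case False
    have "\<not> i dvd (n - i)"
    proof
      assume "i dvd n - i"
      hence "i dvd (n - i) + i" using dvd_add dvd_refl by blast
      thus False using False by simp
    qed
    moreover have "n \<noteq> i * j" "n \<noteq> 0" using False by auto
    ultimately show ?thesis using False by (simp add: efun_def dl_def)
  qed
  thus ?thesis unfolding mult_pair by (simp add: fun_eq_iff dl_shift add.commute)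
qed

lemma ba_eq: "wr_mult wr_b wr_a = (dl 0, 1)" using bX[of 1] by (simp add: wr_a_eq)

lemma mul_core:
  fixes i j l :: int
  shows "(\<exists>w\<in>wr_carrier. \<exists>v\<in>wr_carrier. \<exists>h\<in>wr_carrier.
   wr_mult w (wr_mult wr_b ((\<lambda>_. 0), i)) = wr_mult (wr_mult wr_b ((\<lambda>_. 0), i)) w \<and>
   wr_mult v (wr_mult wr_b wr_a) = wr_mult (wr_mult wr_b wr_a) v \<and>
   wr_mult (wr_mult ((\<lambda>_. 0), j) v) wr_b = wr_mult wr_b (wr_mult ((\<lambda>_. 0), j) v) \<and>
   wr_mult h wr_b = wr_mult wr_b h \<and>
   wr_mult (wr_mult (wr_mult (wr_mult h w) v) ((\<lambda>_. 0), j)) wr_a = wr_mult (wr_mult wr_a h) ((\<lambda>_. 0), l))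
   \<longleftrightarrow> l = i * j"
  (is "?L \<longleftrightarrow> _")
proof
  assume ?L
  then obtain w v h where wvh: "w \<in> wr_carrier" "v \<in> wr_carrier" "h \<in> wr_carrier"
    "wr_mult w (dl 0, i) = wr_mult (dl 0, i) w"
    "wr_mult v (dl 0, 1) = wr_mult (dl 0, 1) v"
    "wr_mult (wr_mult ((\<lambda>_. 0), j) v) wr_b = wr_mult wr_b (wr_mult ((\<lambda>_. 0), j) v)"
    "wr_mult h wr_b = wr_mult wr_b h"
    and eq: "wr_mult (wr_mult (wr_mult (wr_mult h w) v) ((\<lambda>_. 0), j)) wr_a = wr_mult (wr_mult wr_a h) ((\<lambda>_. 0), l)"
    unfolding bX ba_eq by blast
  obtain hw kw where w: "w = (hw, kw)" by fastforce
  obtain hv kv where v: "v = (hv, kv)" by fastforce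
  obtain hh kh where h: "h = (hh, kh)" by fastforce
  have fs: "FS hw" "FS hv" "FS hh" using wvh(1-3) w v h in_C by auto
  have kw: "kw = i * fsum hw" using commBX[OF fs(1)] wvh(4) w by simp
  have kv: "kv = fsum hv" using commBX[OF fs(2), of kv 1] wvh(5) v by simp
  have jkv: "j + kv = 0" using wvh(6) commB v by (simp add: mult_pair)
  have kh: "kh = 0" using wvh(7) commB h by simp
  from eq have fe: "(\<lambda>n. hh n + hw n + hv (n - kw)) = (\<lambda>n. hh (n - 1))" and ke: "kw + kv + j + 1 = 1 + l"
    unfolding w v h kh wr_a_eq mult_pair by (simp_all add: fun_eq_iff)
  have "fsum (\<lambda>n. hh n + hw n + hv (n - kw)) = fsum (\<lambda>n. hh (n - 1))" using fe by simp
  hence "fsum hh + fsum hw + fsum hv = fsum hh"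
    using fs by (simp add: fsum_add FS_add FS_shift fsum_shift)
  hence "fsum hw = j" using kv jkv by linarith
  thus "l = i * j" using kw kv jkv ke by simp
next
  assume l: "l = i * j"
  obtain hw where hw: "FS hw" "wr_mult (hw, l) (dl 0, i) = wr_mult (dl 0, i) (hw, l)" "fsum hw = j"
  proof (cases "i = 0")
    case True
    show thesis
    proof (rule that[of "\<lambda>n. j * dl 0 n"])
      show "FS (\<lambda>n. j * dl 0 n)" using FS_dl by (rule FS_cmult)
      show "wr_mult (\<lambda>n. j * dl 0 n, l) (dl 0, i) = wr_mult (dl 0, i) (\<lambda>n. j * dl 0 n, l)"
        using True l by (simp add: mult_pair add.commute)
      show "fsum (\<lambda>n. j * dl 0 n) = j" using fsum_cmult[OF FS_dl] by (simp add: fsum_dl)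
    qed
  next
    case False
    have "i * j = i * fsum (efun i j)" using commBX[OF FS_efun[OF False] efun_comm[OF False]] .
    hence "fsum (efun i j) = j" using False by simp
    thus thesis using that[of "efun i j"] FS_efun[OF False] efun_comm[OF False] l by simp
  qed
  define hv where "hv = sfun (-j)"
  have fsv: "FS hv" unfolding hv_def by (rule FS_sfun)
  have vc: "wr_mult (hv, -j) (dl 0, 1) = wr_mult (dl 0, 1) (hv, -j)" unfolding hv_def by (rule sfun_comm)
  have sv: "fsum hv = - j" using commBX[OF fsv vc] by simp
  define g where "g n = - (hw n + hv (n - l))" for n
  have fsg: "FS g" unfolding g_def using hw(1) fsv by (intro FS_neg FS_add FS_shift)
  have "fsum g = - fsum (\<lambda>n. hw n + hv (n - l))" unfolding g_def by (rule fsum_neg)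
  also have "fsum (\<lambda>n. hw n + hv (n - l)) = fsum hw + fsum hv"
    using hw(1) fsv by (simp add: fsum_add FS_shift fsum_shift)
  finally have "fsum g = 0" using hw(3) sv by simp
  then obtain hh where hh: "FS hh" "\<forall>n. hh n = hh (n - 1) + g n" using telescope fsg by blast
  show ?L
  proof (intro bexI conjI)
    show "wr_mult (hw, l) (wr_mult wr_b ((\<lambda>_. 0), i)) = wr_mult (wr_mult wr_b ((\<lambda>_. 0), i)) (hw, l)"
      unfolding bX by (rule hw(2))
    show "wr_mult (hv, -j) (wr_mult wr_b wr_a) = wr_mult (wr_mult wr_b wr_a) (hv, -j)"
      unfolding ba_eq by (rule vc)
    show "wr_mult (wr_mult ((\<lambda>_. 0), j) (hv, -j)) wr_b = wr_mult wr_b (wr_mult ((\<lambda>_. 0), j) (hv, -j))"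
      unfolding commB by (simp add: mult_pair)
    show "wr_mult (hh, 0) wr_b = wr_mult wr_b (hh, 0)" unfolding commB by simp
    show "wr_mult (wr_mult (wr_mult (wr_mult (hh, 0) (hw, l)) (hv, -j)) ((\<lambda>_. 0), j)) wr_a =
          wr_mult (wr_mult wr_a (hh, 0)) ((\<lambda>_. 0), l)"
      using hh(2) unfolding wr_a_eq mult_pair g_def by (simp add: fun_eq_iff algebra_simps)
  qed (use hw(1) fsv hh(1) in \<open>simp_all add: in_C\<close>)
qed

definition commF :: "gterm \<Rightarrow> gterm \<Rightarrow> gform" where
  "commF s t = GEq (GMul s t) (GMul t s)"

definition MulF :: "nat \<Rightarrow> nat \<Rightarrow> nat \<Rightarrow> nat \<Rightarrow> nat \<Rightarrow> nat \<Rightarrow> gform" where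
  "MulF A B x y z F = GEx F (GEx (F+1) (GEx (F+2) (
     GAnd (commF (GVar F) (GMul (GVar B) (GVar x)))
    (GAnd (commF (GVar (F+1)) (GMul (GVar B) (GVar A)))
    (GAnd (commF (GMul (GVar y) (GVar (F+1))) (GVar B))
    (GAnd (commF (GVar (F+2)) (GVar B))
     (GEq (GMul (GMul (GMul (GMul (GVar (F+2)) (GVar F)) (GVar (F+1))) (GVar y)) (GVar A))
          (GMul (GMul (GVar A) (GVar (F+2))) (GVar z)))))))))"

abbreviation "gs \<equiv> gsat wr_carrier wr_mult"

lemma MulF_sem:
  assumes "x < F" "y < F" "z < F" "A < F" "B < F" "e A = wr_a" "e B = wr_b"
    "e x = ((\<lambda>_. 0), i)" "e y = ((\<lambda>_. 0), j)" "e z = ((\<lambda>_. 0), l)"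
  shows "gs e (MulF A B x y z F) \<longleftrightarrow> l = i * j"
proof -
  have "gs e (MulF A B x y z F) \<longleftrightarrow> (\<exists>w\<in>wr_carrier. \<exists>v\<in>wr_carrier. \<exists>h\<in>wr_carrier.
   wr_mult w (wr_mult wr_b ((\<lambda>_. 0), i)) = wr_mult (wr_mult wr_b ((\<lambda>_. 0), i)) w \<and>
   wr_mult v (wr_mult wr_b wr_a) = wr_mult (wr_mult wr_b wr_a) v \<and>
   wr_mult (wr_mult ((\<lambda>_. 0), j) v) wr_b = wr_mult wr_b (wr_mult ((\<lambda>_. 0), j) v) \<and>
   wr_mult h wr_b = wr_mult wr_b h \<and>
   wr_mult (wr_mult (wr_mult (wr_mult h w) v) ((\<lambda>_. 0), j)) wr_a = wr_mult (wr_mult wr_a h) ((\<lambda>_. 0), l))"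
    using assms by (simp add: MulF_def commF_def)
  also have "\<dots> \<longleftrightarrow> l = i * j" by (rule mul_core)
  finally show ?thesis .
qed


lemma inA_iff: "g \<in> wr_carrier \<Longrightarrow> wr_mult g wr_a = wr_mult wr_a g \<longleftrightarrow> (\<exists>k. g = ((\<lambda>_. 0), k))"
  by (rule commA)

definition SqF :: "nat \<Rightarrow> nat \<Rightarrow> nat \<Rightarrow> nat \<Rightarrow> gform" where
  "SqF A B P F = GAnd (commF (GVar P) (GVar A))
     (GEx F (GAnd (commF (GVar F) (GVar A)) (MulF A B F F P (F+1))))"

lemma SqF_sem:
  assumes "P < F" "A < F" "B < F" "e A = wr_a" "e B = wr_b" "e P \<in> wr_carrier"
  shows "gs e (SqF A B P F) \<longleftrightarrow> (\<exists>t. e P = ((\<lambda>_. 0), t * t))"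
proof
  assume g: "gs e (SqF A B P F)"
  hence "wr_mult (e P) wr_a = wr_mult wr_a (e P)" using assms by (simp add: SqF_def commF_def)
  then obtain k where k: "e P = ((\<lambda>_. 0), k)" using commA assms(6) by blast
  from g obtain p where p: "p \<in> wr_carrier" "wr_mult p wr_a = wr_mult wr_a p"
     "gs (e(F := p)) (MulF A B F F P (F+1))"
    using assms by (auto simp: SqF_def commF_def)
  then obtain t where t: "p = ((\<lambda>_. 0), t)" using commA by blast
  have "k = t * t" using MulF_sem[of F "F+1" F P A B "e(F := p)" t t k] p(3) assms k t by simp
  thus "\<exists>t. e P = ((\<lambda>_. 0), t * t)" using k by blast
next
  assume "\<exists>t. e P = ((\<lambda>_. 0), t * t)"
  then obtain t where t: "e P = ((\<lambda>_. 0), t * t)" by blast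
  have "gs (e(F := ((\<lambda>_. 0), t))) (MulF A B F F P (F+1))"
    using MulF_sem[of F "F+1" F P A B "e(F := ((\<lambda>_. 0), t))" t t "t*t"] assms t by simp
  moreover have "wr_mult ((\<lambda>_. 0::int), t) wr_a = wr_mult wr_a ((\<lambda>_. 0), t)"
    using commA zero_in_C by blast
  moreover have "wr_mult (e P) wr_a = wr_mult wr_a (e P)" using t commA zero_in_C by metis
  ultimately show "gs e (SqF A B P F)" using assms zero_in_C
    by (auto simp: SqF_def commF_def intro!: bexI[of _ "((\<lambda>_. 0), t)"])
qed

definition PosF :: "nat \<Rightarrow> nat \<Rightarrow> nat \<Rightarrow> nat \<Rightarrow> gform" where
  "PosF A B x F = GAnd (commF (GVar x) (GVar A))
     (GEx F (GEx (F+1) (GEx (F+2) (GEx (F+3) (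
        GAnd (SqF A B F (F+4)) (GAnd (SqF A B (F+1) (F+4)) (GAnd (SqF A B (F+2) (F+4))
        (GAnd (SqF A B (F+3) (F+4))
          (GEq (GVar x) (GMul (GMul (GMul (GVar F) (GVar (F+1))) (GVar (F+2))) (GVar (F+3))))))))))))"

lemma PosF_sem:
  assumes "x < F" "A < F" "B < F" "e A = wr_a" "e B = wr_b" "e x \<in> wr_carrier"
  shows "gs e (PosF A B x F) \<longleftrightarrow> (\<exists>n::nat. e x = ((\<lambda>_. 0), int n))"
proof
  assume g: "gs e (PosF A B x F)"
  hence "wr_mult (e x) wr_a = wr_mult wr_a (e x)" using assms by (simp add: PosF_def commF_def)
  then obtain k where k: "e x = ((\<lambda>_. 0), k)" using commA assms(6) by blast
  from g obtain p q r s where pqrs: "p \<in> wr_carrier" "q \<in> wr_carrier" "r \<in> wr_carrier" "s \<in> wr_carrier"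
    "gs (e(F := p, F+1 := q, F+2 := r, F+3 := s)) (SqF A B F (F+4))"
    "gs (e(F := p, F+1 := q, F+2 := r, F+3 := s)) (SqF A B (F+1) (F+4))"
    "gs (e(F := p, F+1 := q, F+2 := r, F+3 := s)) (SqF A B (F+2) (F+4))"
    "gs (e(F := p, F+1 := q, F+2 := r, F+3 := s)) (SqF A B (F+3) (F+4))"
    "e x = wr_mult (wr_mult (wr_mult p q) r) s"
    using assms by (simp add: PosF_def commF_def) blast
  obtain a where a: "p = ((\<lambda>_. 0), a * a)" using SqF_sem[of F "F+4" A B, OF _ _ _ _ _ _] pqrs(1,5) assms by auto
  obtain b where b: "q = ((\<lambda>_. 0), b * b)" using SqF_sem[of "F+1" "F+4" A B, OF _ _ _ _ _ _] pqrs(2,6) assms by auto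
  obtain c where c: "r = ((\<lambda>_. 0), c * c)" using SqF_sem[of "F+2" "F+4" A B, OF _ _ _ _ _ _] pqrs(3,7) assms by auto
  obtain d where d: "s = ((\<lambda>_. 0), d * d)" using SqF_sem[of "F+3" "F+4" A B, OF _ _ _ _ _ _] pqrs(4,8) assms by auto
  have "k = a^2 + b^2 + c^2 + d^2" using pqrs(9) k a b c d by (simp add: mult_pair power2_eq_square)
  hence "sq4 k" unfolding sq4_def by blast
  hence "0 \<le> k" using sq4_iff_nonneg by blast
  thus "\<exists>n::nat. e x = ((\<lambda>_. 0), int n)" using k by (intro exI[of _ "nat k"]) simp
next
  assume "\<exists>n::nat. e x = ((\<lambda>_. 0), int n)"
  then obtain n where n: "e x = ((\<lambda>_. 0), int n)" by blast
  then obtain a b c d where abcd: "int n = a^2 + b^2 + c^2 + d^2" using nat_sq4[of n] unfolding sq4_def by blast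
  define e' where "e' = e(F := ((\<lambda>_. 0), a*a), F+1 := ((\<lambda>_. 0), b*b), F+2 := ((\<lambda>_. 0), c*c), F+3 := ((\<lambda>_. 0), d*d))"
  have s1: "gs e' (SqF A B F (F+4))" by (subst SqF_sem) (use assms in \<open>auto simp: e'_def zero_in_C\<close>)
  have s2: "gs e' (SqF A B (F+1) (F+4))" by (subst SqF_sem) (use assms in \<open>auto simp: e'_def zero_in_C\<close>)
  have s3: "gs e' (SqF A B (F+2) (F+4))" by (subst SqF_sem) (use assms in \<open>auto simp: e'_def zero_in_C\<close>)
  have s4: "gs e' (SqF A B (F+3) (F+4))" by (subst SqF_sem) (use assms in \<open>auto simp: e'_def zero_in_C\<close>)
  have ex: "e x = wr_mult (wr_mult (wr_mult ((\<lambda>_. 0), a*a) ((\<lambda>_. 0), b*b)) ((\<lambda>_. 0), c*c)) ((\<lambda>_. 0), d*d)"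
    using n abcd by (simp add: mult_pair power2_eq_square)
  have cx: "wr_mult (e x) wr_a = wr_mult wr_a (e x)" using n commA zero_in_C by metis
  show "gs e (PosF A B x F)"
    unfolding PosF_def using s1 s2 s3 s4 ex cx assms zero_in_C unfolding e'_def
    by (simp add: commF_def) blast
qed

fun TmF :: "(nat \<Rightarrow> nat) \<Rightarrow> nat \<Rightarrow> nat \<Rightarrow> aterm \<Rightarrow> nat \<Rightarrow> nat \<Rightarrow> gform" where
  "TmF \<rho> A B (AVar v) y F = GEq (GVar y) (GVar (\<rho> v))"
| "TmF \<rho> A B (APlus s t) y F = GEx F (GEx (F+1) (GAnd (TmF \<rho> A B s F (F+2))
     (GAnd (TmF \<rho> A B t (F+1) (F+2)) (GEq (GVar y) (GMul (GVar F) (GVar (F+1)))))))"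
| "TmF \<rho> A B (ATimes s t) y F = GEx F (GEx (F+1) (GAnd (TmF \<rho> A B s F (F+2))
     (GAnd (TmF \<rho> A B t (F+1) (F+2)) (GAnd (commF (GVar y) (GVar A)) (MulF A B F (F+1) y (F+2))))))"

lemma TmF_sem:
  assumes "\<forall>v\<in>atvars t. \<rho> v < F \<and> e (\<rho> v) = ((\<lambda>_. 0), int (\<nu> v))"
    "y < F" "A < F" "B < F" "e A = wr_a" "e B = wr_b" "e y \<in> wr_carrier"
  shows "gs e (TmF \<rho> A B t y F) \<longleftrightarrow> e y = ((\<lambda>_. 0), int (aval \<nu> t))"
  using assms
proof (induction t arbitrary: y F e)
  case (AVar v)
  thus ?case by simp
next
  case (APlus s t)
  have IHs: "gs (e(F := w1, F+1 := w2)) (TmF \<rho> A B s F (F+2)) \<longleftrightarrow> w1 = ((\<lambda>_. 0), int (aval \<nu> s))"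
    if "w1 \<in> wr_carrier" for w1 w2
  proof -
    have pre: "\<forall>v\<in>atvars s. \<rho> v < F+2 \<and> (e(F := w1, F+1 := w2)) (\<rho> v) = ((\<lambda>_. 0), int (\<nu> v))"
    proof
      fix v assume "v \<in> atvars s"
      hence "\<rho> v < F \<and> e (\<rho> v) = ((\<lambda>_. 0), int (\<nu> v))" using APlus.prems(1) by simp
      thus "\<rho> v < F+2 \<and> (e(F := w1, F+1 := w2)) (\<rho> v) = ((\<lambda>_. 0), int (\<nu> v))" by simp
    qed
    have conc: "gs (e(F := w1, F+1 := w2)) (TmF \<rho> A B s F (F+2)) \<longleftrightarrow> (e(F := w1, F+1 := w2)) F = ((\<lambda>_. 0), int (aval \<nu> s))"
      by (rule APlus.IH(1)[where y=F and F="F+2" and e="e(F := w1, F+1 := w2)", OF pre]) (use APlus.prems that in simp_all)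
    show ?thesis unfolding conc by simp
  qed
  have IHt: "gs (e(F := w1, F+1 := w2)) (TmF \<rho> A B t (F+1) (F+2)) \<longleftrightarrow> w2 = ((\<lambda>_. 0), int (aval \<nu> t))"
    if "w2 \<in> wr_carrier" for w1 w2
  proof -
    have pre: "\<forall>v\<in>atvars t. \<rho> v < F+2 \<and> (e(F := w1, F+1 := w2)) (\<rho> v) = ((\<lambda>_. 0), int (\<nu> v))"
    proof
      fix v assume "v \<in> atvars t"
      hence "\<rho> v < F \<and> e (\<rho> v) = ((\<lambda>_. 0), int (\<nu> v))" using APlus.prems(1) by simp
      thus "\<rho> v < F+2 \<and> (e(F := w1, F+1 := w2)) (\<rho> v) = ((\<lambda>_. 0), int (\<nu> v))" by simp
    qed
    have conc: "gs (e(F := w1, F+1 := w2)) (TmF \<rho> A B t (F+1) (F+2)) \<longleftrightarrow> (e(F := w1, F+1 := w2)) (F+1) = ((\<lambda>_. 0), int (aval \<nu> t))"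
      by (rule APlus.IH(2)[where y="F+1" and F="F+2" and e="e(F := w1, F+1 := w2)", OF pre]) (use APlus.prems that in simp_all)
    show ?thesis unfolding conc by simp
  qed
  have "gs e (TmF \<rho> A B (APlus s t) y F) \<longleftrightarrow> (\<exists>w1\<in>wr_carrier. \<exists>w2\<in>wr_carrier.
      gs (e(F := w1, F+1 := w2)) (TmF \<rho> A B s F (F+2)) \<and> gs (e(F := w1, F+1 := w2)) (TmF \<rho> A B t (F+1) (F+2))
      \<and> e y = wr_mult w1 w2)"
    using APlus.prems by simp
  also have "\<dots> \<longleftrightarrow> (\<exists>w1\<in>wr_carrier. \<exists>w2\<in>wr_carrier. w1 = ((\<lambda>_. 0), int (aval \<nu> s)) \<and>
      w2 = ((\<lambda>_. 0), int (aval \<nu> t)) \<and> e y = wr_mult w1 w2)"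
    using IHs IHt by blast
  also have "\<dots> \<longleftrightarrow> e y = ((\<lambda>_. 0), int (aval \<nu> (APlus s t)))"
    using zero_in_C by (auto simp: mult_pair)
  finally show ?case .
next
  case (ATimes s t)
  have IHs: "gs (e(F := w1, F+1 := w2)) (TmF \<rho> A B s F (F+2)) \<longleftrightarrow> w1 = ((\<lambda>_. 0), int (aval \<nu> s))"
    if "w1 \<in> wr_carrier" for w1 w2
  proof -
    have pre: "\<forall>v\<in>atvars s. \<rho> v < F+2 \<and> (e(F := w1, F+1 := w2)) (\<rho> v) = ((\<lambda>_. 0), int (\<nu> v))"
    proof
      fix v assume "v \<in> atvars s"
      hence "\<rho> v < F \<and> e (\<rho> v) = ((\<lambda>_. 0), int (\<nu> v))" using ATimes.prems(1) by simp
      thus "\<rho> v < F+2 \<and> (e(F := w1, F+1 := w2)) (\<rho> v) = ((\<lambda>_. 0), int (\<nu> v))" by simp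
    qed
    have conc: "gs (e(F := w1, F+1 := w2)) (TmF \<rho> A B s F (F+2)) \<longleftrightarrow> (e(F := w1, F+1 := w2)) F = ((\<lambda>_. 0), int (aval \<nu> s))"
      by (rule ATimes.IH(1)[where y=F and F="F+2" and e="e(F := w1, F+1 := w2)", OF pre]) (use ATimes.prems that in simp_all)
    show ?thesis unfolding conc by simp
  qed
  have IHt: "gs (e(F := w1, F+1 := w2)) (TmF \<rho> A B t (F+1) (F+2)) \<longleftrightarrow> w2 = ((\<lambda>_. 0), int (aval \<nu> t))"
    if "w2 \<in> wr_carrier" for w1 w2
  proof -
    have pre: "\<forall>v\<in>atvars t. \<rho> v < F+2 \<and> (e(F := w1, F+1 := w2)) (\<rho> v) = ((\<lambda>_. 0), int (\<nu> v))"
    proof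
      fix v assume "v \<in> atvars t"
      hence "\<rho> v < F \<and> e (\<rho> v) = ((\<lambda>_. 0), int (\<nu> v))" using ATimes.prems(1) by simp
      thus "\<rho> v < F+2 \<and> (e(F := w1, F+1 := w2)) (\<rho> v) = ((\<lambda>_. 0), int (\<nu> v))" by simp
    qed
    have conc: "gs (e(F := w1, F+1 := w2)) (TmF \<rho> A B t (F+1) (F+2)) \<longleftrightarrow> (e(F := w1, F+1 := w2)) (F+1) = ((\<lambda>_. 0), int (aval \<nu> t))"
      by (rule ATimes.IH(2)[where y="F+1" and F="F+2" and e="e(F := w1, F+1 := w2)", OF pre]) (use ATimes.prems that in simp_all)
    show ?thesis unfolding conc by simp
  qed
  have "gs e (TmF \<rho> A B (ATimes s t) y F) \<longleftrightarrow> (\<exists>w1\<in>wr_carrier. \<exists>w2\<in>wr_carrier.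
      gs (e(F := w1, F+1 := w2)) (TmF \<rho> A B s F (F+2)) \<and> gs (e(F := w1, F+1 := w2)) (TmF \<rho> A B t (F+1) (F+2))
      \<and> wr_mult (e y) wr_a = wr_mult wr_a (e y) \<and> gs (e(F := w1, F+1 := w2)) (MulF A B F (F+1) y (F+2)))"
    using ATimes.prems by (simp add: commF_def)
  also have "\<dots> \<longleftrightarrow> (\<exists>w1\<in>wr_carrier. \<exists>w2\<in>wr_carrier. w1 = ((\<lambda>_. 0), int (aval \<nu> s)) \<and>
      w2 = ((\<lambda>_. 0), int (aval \<nu> t)) \<and> wr_mult (e y) wr_a = wr_mult wr_a (e y) \<and>
      gs (e(F := w1, F+1 := w2)) (MulF A B F (F+1) y (F+2)))"
    using IHs IHt by blast
  also have "\<dots> \<longleftrightarrow> e y = ((\<lambda>_. 0), int (aval \<nu> (ATimes s t)))"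
  proof
    assume "\<exists>w1\<in>wr_carrier. \<exists>w2\<in>wr_carrier. w1 = ((\<lambda>_. 0), int (aval \<nu> s)) \<and>
      w2 = ((\<lambda>_. 0), int (aval \<nu> t)) \<and> wr_mult (e y) wr_a = wr_mult wr_a (e y) \<and>
      gs (e(F := w1, F+1 := w2)) (MulF A B F (F+1) y (F+2))"
    then obtain k where k: "e y = ((\<lambda>_. 0), k)"
      and m: "gs (e(F := ((\<lambda>_. 0), int (aval \<nu> s)), F+1 := ((\<lambda>_. 0), int (aval \<nu> t)))) (MulF A B F (F+1) y (F+2))"
      using commA ATimes.prems(7) by blast
    have "k = int (aval \<nu> s) * int (aval \<nu> t)"
      using MulF_sem[OF _ _ _ _ _ _ _ _ _ _, of F "F+2" "F+1" y A B _ _ _ k] m ATimes.prems k by simp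
    thus "e y = ((\<lambda>_. 0), int (aval \<nu> (ATimes s t)))" using k by simp
  next
    assume ey: "e y = ((\<lambda>_. 0), int (aval \<nu> (ATimes s t)))"
    have "gs (e(F := ((\<lambda>_. 0), int (aval \<nu> s)), F+1 := ((\<lambda>_. 0), int (aval \<nu> t)))) (MulF A B F (F+1) y (F+2))"
      by (subst MulF_sem[of F "F+2" "F+1" y A B _ "int (aval \<nu> s)" "int (aval \<nu> t)" "int (aval \<nu> (ATimes s t))"])
         (use ATimes.prems ey in auto)
    moreover have "wr_mult (e y) wr_a = wr_mult wr_a (e y)" using ey commA zero_in_C by metis
    ultimately show "\<exists>w1\<in>wr_carrier. \<exists>w2\<in>wr_carrier. w1 = ((\<lambda>_. 0), int (aval \<nu> s)) \<and>
      w2 = ((\<lambda>_. 0), int (aval \<nu> t)) \<and> wr_mult (e y) wr_a = wr_mult wr_a (e y) \<and>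
      gs (e(F := w1, F+1 := w2)) (MulF A B F (F+1) y (F+2))" using zero_in_C by blast
  qed
  finally show ?case .
qed

fun FmF :: "(nat \<Rightarrow> nat) \<Rightarrow> nat \<Rightarrow> nat \<Rightarrow> aform \<Rightarrow> nat \<Rightarrow> gform" where
  "FmF \<rho> A B (AEq s t) F = GEx F (GEx (F+1) (GAnd (TmF \<rho> A B s F (F+2))
     (GAnd (TmF \<rho> A B t (F+1) (F+2)) (GEq (GVar F) (GVar (F+1))))))"
| "FmF \<rho> A B (ANot \<phi>) F = GNot (FmF \<rho> A B \<phi> F)"
| "FmF \<rho> A B (AAnd \<phi> \<psi>) F = GAnd (FmF \<rho> A B \<phi> F) (FmF \<rho> A B \<psi> F)"
| "FmF \<rho> A B (AEx v \<phi>) F = GEx (\<rho> v) (GAnd (PosF A B (\<rho> v) F) (FmF \<rho> A B \<phi> F))"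

fun aallv :: "aform \<Rightarrow> nat set" where
  "aallv (AEq s t) = atvars s \<union> atvars t"
| "aallv (ANot \<phi>) = aallv \<phi>"
| "aallv (AAnd \<phi> \<psi>) = aallv \<phi> \<union> aallv \<psi>"
| "aallv (AEx v \<phi>) = insert v (aallv \<phi>)"

lemma afv_sub: "afv \<phi> \<subseteq> aallv \<phi>"
  by (induction \<phi>) auto

lemma FmF_sem:
  assumes "inj \<rho>" "\<forall>v\<in>aallv \<phi>. \<rho> v < F \<and> \<rho> v \<noteq> A \<and> \<rho> v \<noteq> B"
    "\<forall>v\<in>afv \<phi>. e (\<rho> v) = ((\<lambda>_. 0), int (\<nu> v))"
    "A < F" "B < F" "e A = wr_a" "e B = wr_b"
  shows "gs e (FmF \<rho> A B \<phi> F) \<longleftrightarrow> asat \<nu> \<phi>"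
  using assms(2-)
proof (induction \<phi> arbitrary: e \<nu>)
  case (AEq s t)
  have pre: "\<forall>v\<in>atvars u. \<rho> v < F+2 \<and> (e(F := w1, F+1 := w2)) (\<rho> v) = ((\<lambda>_. 0), int (\<nu> v))"
    if "atvars u \<subseteq> atvars s \<union> atvars t" for u w1 w2
  proof
    fix v assume "v \<in> atvars u"
    hence "\<rho> v < F \<and> e (\<rho> v) = ((\<lambda>_. 0), int (\<nu> v))" using AEq.prems that by auto
    thus "\<rho> v < F+2 \<and> (e(F := w1, F+1 := w2)) (\<rho> v) = ((\<lambda>_. 0), int (\<nu> v))" by simp
  qed
  have cs: "gs (e(F := w1, F+1 := w2)) (TmF \<rho> A B s F (F+2)) \<longleftrightarrow>
      (e(F := w1, F+1 := w2)) F = ((\<lambda>_. 0), int (aval \<nu> s))" if "w1 \<in> wr_carrier" for w1 w2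
    by (rule TmF_sem[OF pre]) (use AEq.prems that in simp_all)
  have ct: "gs (e(F := w1, F+1 := w2)) (TmF \<rho> A B t (F+1) (F+2)) \<longleftrightarrow>
      (e(F := w1, F+1 := w2)) (F+1) = ((\<lambda>_. 0), int (aval \<nu> t))" if "w2 \<in> wr_carrier" for w1 w2
    by (rule TmF_sem[OF pre]) (use AEq.prems that in simp_all)
  have "gs e (FmF \<rho> A B (AEq s t) F) \<longleftrightarrow> (\<exists>w1\<in>wr_carrier. \<exists>w2\<in>wr_carrier.
      gs (e(F := w1, F+1 := w2)) (TmF \<rho> A B s F (F+2)) \<and> gs (e(F := w1, F+1 := w2)) (TmF \<rho> A B t (F+1) (F+2))
      \<and> w1 = w2)"
    by simp
  also have "\<dots> \<longleftrightarrow> (\<exists>w1\<in>wr_carrier. \<exists>w2\<in>wr_carrier. w1 = ((\<lambda>_. 0), int (aval \<nu> s)) \<and>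
      w2 = ((\<lambda>_. 0), int (aval \<nu> t)) \<and> w1 = w2)"
  proof -
    have "\<And>w1 w2. w1 \<in> wr_carrier \<Longrightarrow> w2 \<in> wr_carrier \<Longrightarrow>
      (gs (e(F := w1, F+1 := w2)) (TmF \<rho> A B s F (F+2)) \<and> gs (e(F := w1, F+1 := w2)) (TmF \<rho> A B t (F+1) (F+2))
      \<and> w1 = w2) \<longleftrightarrow> (w1 = ((\<lambda>_. 0), int (aval \<nu> s)) \<and> w2 = ((\<lambda>_. 0), int (aval \<nu> t)) \<and> w1 = w2)"
      using cs ct by simp
    thus ?thesis by blast
  qed
  also have "\<dots> \<longleftrightarrow> asat \<nu> (AEq s t)" using zero_in_C by auto
  finally show ?case .
next
  case (ANot \<phi>)
  thus ?case by simp
next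
  case (AAnd \<phi> \<psi>)
  have "gs e (FmF \<rho> A B \<phi> F) \<longleftrightarrow> asat \<nu> \<phi>" by (rule AAnd.IH(1)) (use AAnd.prems in auto)
  moreover have "gs e (FmF \<rho> A B \<psi> F) \<longleftrightarrow> asat \<nu> \<psi>" by (rule AAnd.IH(2)) (use AAnd.prems in auto)
  ultimately show ?case by simp
next
  case (AEx v \<phi>)
  have rv: "\<rho> v < F" "\<rho> v \<noteq> A" "\<rho> v \<noteq> B" using AEx.prems(1) by auto
  have pos: "gs (e(\<rho> v := x)) (PosF A B (\<rho> v) F) \<longleftrightarrow> (\<exists>n::nat. x = ((\<lambda>_. 0), int n))"
    if "x \<in> wr_carrier" for x
    by (subst PosF_sem) (use AEx.prems rv that in simp_all)
  have ih: "gs (e(\<rho> v := ((\<lambda>_. 0), int n))) (FmF \<rho> A B \<phi> F) \<longleftrightarrow> asat (\<nu>(v := n)) \<phi>" for n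
  proof (rule AEx.IH)
    show "\<forall>u\<in>aallv \<phi>. \<rho> u < F \<and> \<rho> u \<noteq> A \<and> \<rho> u \<noteq> B" using AEx.prems(1) by auto
    show "\<forall>u\<in>afv \<phi>. (e(\<rho> v := ((\<lambda>_. 0), int n))) (\<rho> u) = ((\<lambda>_. 0), int ((\<nu>(v := n)) u))"
    proof
      fix u assume u: "u \<in> afv \<phi>"
      show "(e(\<rho> v := ((\<lambda>_. 0), int n))) (\<rho> u) = ((\<lambda>_. 0), int ((\<nu>(v := n)) u))"
      proof (cases "u = v")
        case True thus ?thesis by simp
      next
        case False
        hence "\<rho> u \<noteq> \<rho> v" using assms(1) by (auto dest: injD)
        thus ?thesis using AEx.prems(2) u False by simp
      qed
    qed
  qed (use AEx.prems rv in simp_all)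
  have "gs e (FmF \<rho> A B (AEx v \<phi>) F) \<longleftrightarrow> (\<exists>x\<in>wr_carrier. gs (e(\<rho> v := x)) (PosF A B (\<rho> v) F) \<and>
     gs (e(\<rho> v := x)) (FmF \<rho> A B \<phi> F))" by simp
  also have "\<dots> \<longleftrightarrow> (\<exists>n::nat. gs (e(\<rho> v := ((\<lambda>_. 0), int n))) (FmF \<rho> A B \<phi> F))"
    using pos zero_in_C by blast
  also have "\<dots> \<longleftrightarrow> asat \<nu> (AEx v \<phi>)" using ih by simp
  finally show ?case .
qed

lemma gfv_MulF: "gfv (MulF A B x y z F) \<subseteq> {x, y, z, A, B}"
  by (auto simp: MulF_def commF_def)

lemma gfv_SqF: "gfv (SqF A B P F) \<subseteq> {P, A, B}"
  using gfv_MulF[of A B F F P "F+1"] by (auto simp: SqF_def commF_def)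

lemma gfv_PosF: "gfv (PosF A B x F) \<subseteq> {x, A, B}"
  using gfv_SqF[of A B F "F+4"] gfv_SqF[of A B "F+1" "F+4"] gfv_SqF[of A B "F+2" "F+4"] gfv_SqF[of A B "F+3" "F+4"]
  by (auto simp: PosF_def commF_def)

lemma gfv_TmF: "gfv (TmF \<rho> A B t y F) \<subseteq> {y, A, B} \<union> \<rho> ` atvars t"
proof (induction t arbitrary: y F)
  case (AVar v) thus ?case by simp
next
  case (APlus s t)
  thus ?case using APlus.IH[of F "F+2"] APlus.IH[of "F+1" "F+2"] by fastforce
next
  case (ATimes s t)
  thus ?case using ATimes.IH[of F "F+2"] ATimes.IH[of "F+1" "F+2"] gfv_MulF[of A B F "F+1" y "F+2"]
    by (fastforce simp: commF_def)
qed

lemma gfv_FmF: "inj \<rho> \<Longrightarrow> gfv (FmF \<rho> A B \<phi> F) \<subseteq> {A, B} \<union> \<rho> ` afv \<phi>"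
proof (induction \<phi>)
  case (AEq s t)
  thus ?case using gfv_TmF[of \<rho> A B s F "F+2"] gfv_TmF[of \<rho> A B t "F+1" "F+2"] by fastforce
next
  case (ANot \<phi>) thus ?case by simp
next
  case (AAnd \<phi> \<psi>) thus ?case by auto
next
  case (AEx v \<phi>)
  have "gfv (FmF \<rho> A B (AEx v \<phi>) F) = (gfv (PosF A B (\<rho> v) F) \<union> gfv (FmF \<rho> A B \<phi> F)) - {\<rho> v}" by simp
  also have "\<dots> \<subseteq> ({\<rho> v, A, B} \<union> ({A, B} \<union> \<rho> ` afv \<phi>)) - {\<rho> v}"
    using gfv_PosF[of A B "\<rho> v" F] AEx by blast
  also have "\<dots> \<subseteq> {A, B} \<union> \<rho> ` afv (AEx v \<phi>)" using AEx.prems by (auto dest: injD)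
  finally show ?case .
qed

fun posall :: "nat \<Rightarrow> nat \<Rightarrow> nat \<Rightarrow> nat \<Rightarrow> gform" where
  "posall A B F 0 = GEq (GVar A) (GVar A)"
| "posall A B F (Suc j) = GAnd (PosF A B j F) (posall A B F j)"

lemma gfv_posall: "gfv (posall A B F j) \<subseteq> {..<j} \<union> {A, B}"
  by (induction j) (use gfv_PosF in fastforce)+

lemma posall_sem:
  assumes "\<forall>i<j. i < F \<and> e i \<in> wr_carrier" "A < F" "B < F" "e A = wr_a" "e B = wr_b"
  shows "gs e (posall A B F j) \<longleftrightarrow> (\<forall>i<j. \<exists>n::nat. e i = ((\<lambda>_. 0), int n))"
  using assms(1)
proof (induction j)
  case 0 thus ?case by simp
next
  case (Suc j)
  have "gs e (PosF A B j F) \<longleftrightarrow> (\<exists>n::nat. e j = ((\<lambda>_. 0), int n))"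
    by (rule PosF_sem) (use Suc.prems assms in auto)
  moreover have "gs e (posall A B F j) \<longleftrightarrow> (\<forall>i<j. \<exists>n::nat. e i = ((\<lambda>_. 0), int n))"
    by (rule Suc.IH) (use Suc.prems in auto)
  ultimately show ?case by (auto simp: less_Suc_eq)
qed

lemma finite_aallv: "finite (aallv \<phi>)"
proof -
  have "finite (atvars t)" for t by (induction t) auto
  thus ?thesis by (induction \<phi>) auto
qed

lemma concat_single: "\<forall>d\<in>set ds. \<exists>x. d = [x] \<Longrightarrow> concat ds = map hd ds"
  by (induction ds) auto

theorem lemma5p1:
  shows "interpretation_params_nat wr_carrier wr_mult 1
           {[wr_pow wr_a n] | n. True}
           (\<lambda>xs. THE n. xs = [wr_pow wr_a n])"
proof -
  define D where "D = {[wr_pow wr_a n] | n. True}"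
  define f where "f = (\<lambda>xs. THE n. xs = [wr_pow wr_a n])"
  have fD: "f [wr_pow wr_a m] = m" for m
    unfolding f_def by (rule the_equality) (auto simp: pow_a)
  have b_in: "wr_b \<in> wr_carrier" "wr_a \<in> wr_carrier"
    using FS_dl zero_in_C by (auto simp: wr_b_eq wr_a_eq in_C)
  have part3: "group_definable_params wr_carrier wr_mult (1 * k)
          {concat ds | ds. length ds = k \<and> set ds \<subseteq> D \<and> map f ds \<in> S}"
    if ad: "arith_definable k S" for k S
  proof -
    obtain \<phi> where \<phi>: "afv \<phi> \<subseteq> {..<k}" "S = {xs. length xs = k \<and> asat (\<lambda>i. xs ! i) \<phi>}"
      using ad unfolding arith_definable_def by blast
    define \<rho> where "\<rho> v = (if v < k then v else v + k + 2)" for v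
    define F where "F = k + 3 + Max (aallv \<phi> \<union> {0})"
    define A where "A = k"
    define B where "B = k + 1"
    define ps where "ps = [wr_a, wr_b]"
    define \<psi> where "\<psi> = GAnd (posall A B F k) (FmF \<rho> A B \<phi> F)"
    have inj: "inj \<rho>" unfolding \<rho>_def by (rule injI) (auto split: if_splits)
    have rhoF: "\<forall>v\<in>aallv \<phi>. \<rho> v < F \<and> \<rho> v \<noteq> A \<and> \<rho> v \<noteq> B"
    proof
      fix v assume "v \<in> aallv \<phi>"
      hence "v \<le> Max (aallv \<phi> \<union> {0})" using finite_aallv by (intro Max_ge) auto
      thus "\<rho> v < F \<and> \<rho> v \<noteq> A \<and> \<rho> v \<noteq> B" unfolding \<rho>_def F_def A_def B_def by auto
    qed
    have AF: "A < F" "B < F" "k \<le> F" unfolding A_def B_def F_def by auto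
    have rho_small: "\<rho> i = i" if "i < k" for i using that unfolding \<rho>_def by simp
    have fv: "gfv \<psi> \<subseteq> {..<1 * k + length ps}"
    proof -
      have "\<rho> ` afv \<phi> \<subseteq> {..<k}" using \<phi>(1) rho_small by auto
      hence s1: "{A, B} \<union> \<rho> ` afv \<phi> \<subseteq> {..<1 * k + length ps}" unfolding ps_def A_def B_def by auto
      have s2: "{..<k} \<union> {A, B} \<subseteq> {..<1 * k + length ps}" unfolding ps_def A_def B_def by auto
      have "gfv \<psi> = gfv (posall A B F k) \<union> gfv (FmF \<rho> A B \<phi> F)" unfolding \<psi>_def by simp
      thus ?thesis using gfv_posall[of A B F k] gfv_FmF[OF inj, of A B \<phi> F] s1 s2 by blast
    qed
    have env: "(xs @ ps) ! A = wr_a" "(xs @ ps) ! B = wr_b" "\<And>i. i < k \<Longrightarrow> (xs @ ps) ! i = xs ! i"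
      if "length xs = k" for xs :: "((int \<Rightarrow> int) \<times> int) list"
      using that unfolding ps_def A_def B_def by (auto simp: nth_append)
    have sem: "gs (\<lambda>i. (xs @ ps) ! i) \<psi> \<longleftrightarrow>
        (\<exists>ns. length ns = k \<and> (\<forall>i<k. xs ! i = ((\<lambda>_. 0), int (ns ! i))) \<and> asat (\<lambda>i. ns ! i) \<phi>)"
      if xs: "length xs = k" "set xs \<subseteq> wr_carrier" for xs
    proof -
      let ?e = "\<lambda>i. (xs @ ps) ! i"
      have pa: "gs ?e (posall A B F k) \<longleftrightarrow> (\<forall>i<k. \<exists>n::nat. xs ! i = ((\<lambda>_. 0), int n))"
      proof -
        have "gs ?e (posall A B F k) \<longleftrightarrow> (\<forall>i<k. \<exists>n::nat. ?e i = ((\<lambda>_. 0), int n))"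
          by (rule posall_sem) (use env[OF xs(1)] xs AF in \<open>auto simp: nth_mem subsetD\<close>)
        thus ?thesis using env(3)[OF xs(1)] by auto
      qed
      have fm: "gs ?e (FmF \<rho> A B \<phi> F) \<longleftrightarrow> asat (\<lambda>i. ns ! i) \<phi>"
        if "\<forall>i<k. xs ! i = ((\<lambda>_. 0), int (ns ! i))" for ns
      proof (rule FmF_sem[OF inj rhoF])
        show "\<forall>v\<in>afv \<phi>. ?e (\<rho> v) = ((\<lambda>_. 0), int (ns ! v))"
          using that \<phi>(1) rho_small env(3)[OF xs(1)] by auto
      qed (use env[OF xs(1)] AF in auto)
      show ?thesis
      proof
        assume g: "gs ?e \<psi>"
        hence "\<forall>i<k. \<exists>n::nat. xs ! i = ((\<lambda>_. 0), int n)" using pa unfolding \<psi>_def by simp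
        then obtain nf where nf: "\<forall>i<k. xs ! i = ((\<lambda>_. 0), int (nf i))" by metis
        define ns where "ns = map nf [0..<k]"
        have nsi: "\<forall>i<k. xs ! i = ((\<lambda>_. 0), int (ns ! i))" using nf unfolding ns_def by simp
        moreover have "asat (\<lambda>i. ns ! i) \<phi>" using fm[OF nsi] g unfolding \<psi>_def by simp
        moreover have "length ns = k" unfolding ns_def by simp
        ultimately show "\<exists>ns. length ns = k \<and> (\<forall>i<k. xs ! i = ((\<lambda>_. 0), int (ns ! i))) \<and> asat (\<lambda>i. ns ! i) \<phi>"
          by blast
      next
        assume "\<exists>ns. length ns = k \<and> (\<forall>i<k. xs ! i = ((\<lambda>_. 0), int (ns ! i))) \<and> asat (\<lambda>i. ns ! i) \<phi>"
        then obtain ns where ns: "length ns = k" "\<forall>i<k. xs ! i = ((\<lambda>_. 0), int (ns ! i))" "asat (\<lambda>i. ns ! i) \<phi>"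
          by blast
        have "gs ?e (posall A B F k)" using pa ns(2) by blast
        moreover have "gs ?e (FmF \<rho> A B \<phi> F)" using fm[OF ns(2)] ns(3) by simp
        ultimately show "gs ?e \<psi>" unfolding \<psi>_def by simp
      qed
    qed
    have seteq: "{concat ds | ds. length ds = k \<and> set ds \<subseteq> D \<and> map f ds \<in> S} =
        {xs. length xs = 1 * k \<and> set xs \<subseteq> wr_carrier \<and> gs (\<lambda>i. (xs @ ps) ! i) \<psi>}"
    proof (intro set_eqI iffI)
      fix xs assume "xs \<in> {concat ds | ds. length ds = k \<and> set ds \<subseteq> D \<and> map f ds \<in> S}"
      then obtain ds where ds: "xs = concat ds" "length ds = k" "set ds \<subseteq> D" "map f ds \<in> S" by blast
      have sing: "\<forall>d\<in>set ds. \<exists>x. d = [x]" using ds(3) unfolding D_def by auto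
      have xs_eq: "xs = map hd ds" using concat_single[OF sing] ds(1) by simp
      define ns where "ns = map f ds"
      have dsi: "ds ! i = [wr_pow wr_a (ns ! i)]" if "i < k" for i
      proof -
        have "ds ! i \<in> D" using ds(2,3) that nth_mem by blast
        then obtain n where "ds ! i = [wr_pow wr_a n]" unfolding D_def by blast
        thus ?thesis using fD that ds(2) unfolding ns_def by simp
      qed
      have lx: "length xs = k" using xs_eq ds(2) by simp
      have xi: "\<forall>i<k. xs ! i = ((\<lambda>_. 0), int (ns ! i))" using dsi xs_eq ds(2) by (simp add: pow_a)
      have sx: "set xs \<subseteq> wr_carrier"
      proof
        fix x assume "x \<in> set xs"
        then obtain i where "i < k" "x = xs ! i" using lx by (metis in_set_conv_nth)
        thus "x \<in> wr_carrier" using xi zero_in_C by simp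
      qed
      have "asat (\<lambda>i. ns ! i) \<phi>" "length ns = k" using ds(4) \<phi>(2) ds(2) unfolding ns_def by auto
      thus "xs \<in> {xs. length xs = 1 * k \<and> set xs \<subseteq> wr_carrier \<and> gs (\<lambda>i. (xs @ ps) ! i) \<psi>}"
        using sem[OF lx sx] lx sx xi by auto
    next
      fix xs assume "xs \<in> {xs. length xs = 1 * k \<and> set xs \<subseteq> wr_carrier \<and> gs (\<lambda>i. (xs @ ps) ! i) \<psi>}"
      hence xs: "length xs = k" "set xs \<subseteq> wr_carrier" "gs (\<lambda>i. (xs @ ps) ! i) \<psi>" by auto
      then obtain ns where ns: "length ns = k" "\<forall>i<k. xs ! i = ((\<lambda>_. 0), int (ns ! i))" "asat (\<lambda>i. ns ! i) \<phi>"
        using sem by blast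
      define ds where "ds = map (\<lambda>x. [x]) xs"
      have "concat ds = xs" unfolding ds_def by (induction xs) auto
      moreover have "length ds = k" unfolding ds_def using xs by simp
      moreover have "set ds \<subseteq> D"
      proof
        fix d assume "d \<in> set ds"
        then obtain i where "i < k" "d = [xs ! i]" unfolding ds_def using xs(1) by (auto simp: in_set_conv_nth)
        thus "d \<in> D" using ns(2) unfolding D_def by (auto simp: pow_a)
      qed
      moreover have "map f ds = ns"
      proof (rule nth_equalityI)
        show "length (map f ds) = length ns" using ns(1) xs(1) unfolding ds_def by simp
        fix i assume "i < length (map f ds)"
        hence i: "i < k" using xs(1) unfolding ds_def by simp
        have "map f ds ! i = f [xs ! i]" using i xs(1) unfolding ds_def by simp
        also have "\<dots> = ns ! i" using ns(2) i fD[of "ns ! i"] by (simp add: pow_a)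
        finally show "map f ds ! i = ns ! i" .
      qed
      moreover have "ns \<in> S" using ns \<phi>(2) by simp
      ultimately show "xs \<in> {concat ds | ds. length ds = k \<and> set ds \<subseteq> D \<and> map f ds \<in> S}" by force
    qed
    show ?thesis unfolding group_definable_params_def
      by (rule exI[of _ \<psi>], rule exI[of _ ps]) (use b_in fv seteq in \<open>simp add: ps_def\<close>)
  qed
  have "D \<subseteq> {xs. length xs = 1 \<and> set xs \<subseteq> wr_carrier}" unfolding D_def using zero_in_C by (auto simp: pow_a)
  moreover have "f ` D = UNIV"
  proof -
    have "m \<in> f ` D" for m using fD[of m] unfolding D_def by (metis (mono_tags, lifting) image_eqI mem_Collect_eq)
    thus ?thesis by auto
  qed
  ultimately show ?thesis unfolding interpretation_params_nat_def D_def[symmetric] f_def[symmetric]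
    using part3 by blast
qed

end
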